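(* Let $T$ be a tree with a root $r$, and let $X\subseteq\|T\|$ be a subspace. Then $X$ is first countable if and only if every $x\in X\cap V(T)$ has only countably many children $t$ with $\lceil t\rceil\cap X\neq\emptyset$.
   Context: For a tree $T$, $\|T\|=V(T)\cup\Omega(T)$, where $\Omega(T)$ is the set of ends (equivalence classes of rays, two rays being equivalent if they share a tail). A region of $T$ is a connected subgraph $C$ with finitely many edges leaving it; $\|C\|$ is $V(C)$ together with the ends of $T$ having a ray in $C$; the sets $\|C\|$ for regions $C$ form a basis of the (compact Hausdorff) topology of $\|T\|$. The tree order: $u\le v$ if $u$ lies on the unique $r$–$v$ path in $T$. The children of $x$ are its neighbours $y$ with $y> x$. For a node $t$, $\lceil t\rceil$ denotes the set of nodes $v\ge t$ together with the ends of $T$ whose ray starting at $r$ passes through $t$. *)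

theory Defs
  imports "HOL-Analysis.Analysis"
begin

definition graph :: "'v set \<Rightarrow> ('v \<Rightarrow> 'v \<Rightarrow> bool) \<Rightarrow> bool" where
  "graph V E \<longleftrightarrow> (\<forall>x y. E x y \<longrightarrow> x \<in> V \<and> y \<in> V \<and> E y x \<and> x \<noteq> y)"

definition is_path :: "'v set \<Rightarrow> ('v \<Rightarrow> 'v \<Rightarrow> bool) \<Rightarrow> 'v list \<Rightarrow> bool" where
  "is_path V E p \<longleftrightarrow> p \<noteq> [] \<and> set p \<subseteq> V \<and> distinct p \<and>
     (\<forall>i. Suc i < length p \<longrightarrow> E (p ! i) (p ! Suc i))"

definition is_cycle :: "'v set \<Rightarrow> ('v \<Rightarrow> 'v \<Rightarrow> bool) \<Rightarrow> 'v list \<Rightarrow> bool" where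
  "is_cycle V E p \<longleftrightarrow> is_path V E p \<and> length p \<ge> 3 \<and> E (last p) (hd p)"

definition connected_set :: "'v set \<Rightarrow> ('v \<Rightarrow> 'v \<Rightarrow> bool) \<Rightarrow> 'v set \<Rightarrow> bool" where
  "connected_set V E S \<longleftrightarrow> S \<subseteq> V \<and>
     (\<forall>u\<in>S. \<forall>v\<in>S. \<exists>p. is_path V E p \<and> set p \<subseteq> S \<and> hd p = u \<and> last p = v)"

definition tree :: "'v set \<Rightarrow> ('v \<Rightarrow> 'v \<Rightarrow> bool) \<Rightarrow> bool" where
  "tree V E \<longleftrightarrow> graph V E \<and> V \<noteq> {} \<and> connected_set V E V \<and> \<not> (\<exists>p. is_cycle V E p)"

definition is_ray :: "'v set \<Rightarrow> ('v \<Rightarrow> 'v \<Rightarrow> bool) \<Rightarrow> (nat \<Rightarrow> 'v) \<Rightarrow> bool" where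
  "is_ray V E f \<longleftrightarrow> inj f \<and> range f \<subseteq> V \<and> (\<forall>i. E (f i) (f (Suc i)))"

definition ray_equiv :: "(nat \<Rightarrow> 'v) \<Rightarrow> (nat \<Rightarrow> 'v) \<Rightarrow> bool" where
  "ray_equiv f g \<longleftrightarrow> (\<exists>i j. \<forall>k. f (i + k) = g (j + k))"

definition ends :: "'v set \<Rightarrow> ('v \<Rightarrow> 'v \<Rightarrow> bool) \<Rightarrow> (nat \<Rightarrow> 'v) set set" where
  "ends V E = {{g. is_ray V E g \<and> ray_equiv f g} | f. is_ray V E f}"

text \<open>The space \<open>\<parallel>T\<parallel>\<close>: vertices (Inl) and ends (Inr).\<close>
type_synonym 'v point = "'v + (nat \<Rightarrow> 'v) set"

definition points :: "'v set \<Rightarrow> ('v \<Rightarrow> 'v \<Rightarrow> bool) \<Rightarrow> 'v point set" where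
  "points V E = Inl ` V \<union> Inr ` ends V E"

text \<open>A connected
  subgraph of a tree contains all edges of the tree between its vertices, so it is
  determined by its (nonempty, connected) vertex set S.\<close>
definition region :: "'v set \<Rightarrow> ('v \<Rightarrow> 'v \<Rightarrow> bool) \<Rightarrow> 'v set \<Rightarrow> bool" where
  "region V E S \<longleftrightarrow> S \<noteq> {} \<and> connected_set V E S \<and>
     finite {(x, y). x \<in> S \<and> y \<notin> S \<and> E x y}"

definition region_points :: "'v set \<Rightarrow> ('v \<Rightarrow> 'v \<Rightarrow> bool) \<Rightarrow> 'v set \<Rightarrow> 'v point set" where
  "region_points V E S = Inl ` S \<union> Inr ` {\<omega> \<in> ends V E. \<exists>f\<in>\<omega>. range f \<subseteq> S}"

definition end_topology :: "'v set \<Rightarrow> ('v \<Rightarrow> 'v \<Rightarrow> bool) \<Rightarrow> 'v point topology" where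
  "end_topology V E = topology_generated_by {region_points V E S | S. region V E S}"

definition tree_le :: "'v set \<Rightarrow> ('v \<Rightarrow> 'v \<Rightarrow> bool) \<Rightarrow> 'v \<Rightarrow> 'v \<Rightarrow> 'v \<Rightarrow> bool" where
  "tree_le V E r u v \<longleftrightarrow> (\<exists>p. is_path V E p \<and> hd p = r \<and> last p = v \<and> u \<in> set p)"

definition children :: "'v set \<Rightarrow> ('v \<Rightarrow> 'v \<Rightarrow> bool) \<Rightarrow> 'v \<Rightarrow> 'v \<Rightarrow> 'v set" where
  "children V E r x = {y. E x y \<and> tree_le V E r x y \<and> x \<noteq> y}"

definition up_closure :: "'v set \<Rightarrow> ('v \<Rightarrow> 'v \<Rightarrow> bool) \<Rightarrow> 'v \<Rightarrow> 'v \<Rightarrow> 'v point set" where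
  "up_closure V E r t = Inl ` {v \<in> V. tree_le V E r t v} \<union>
     Inr ` {\<omega> \<in> ends V E. \<exists>f\<in>\<omega>. f 0 = r \<and> t \<in> range f}"

end

theory Submission
  imports Defs
begin


lemma succ_nth: "(\<forall>i. Suc i < length p \<longrightarrow> E (p!i) (p!Suc i)) \<longleftrightarrow> successively E p"
proof (induction p)
  case Nil then show ?case by simp
next
  case (Cons a p)
  show ?case
  proof (cases p)
    case Nil then show ?thesis by simp
  next
    case (Cons b q)
    have "(\<forall>i. Suc i < length (a#p) \<longrightarrow> E ((a#p)!i) ((a#p)!Suc i)) \<longleftrightarrow>
          E a b \<and> (\<forall>i. Suc i < length p \<longrightarrow> E (p!i) (p!Suc i))"
      using Cons by (auto simp: nth_Cons split: nat.splits)
    then show ?thesis using Cons.IH Cons by simp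
  qed
qed

lemma is_path_alt: "is_path V E p \<longleftrightarrow> p \<noteq> [] \<and> set p \<subseteq> V \<and> distinct p \<and> successively E p"
  unfolding is_path_def succ_nth ..

lemma walk_to_path:
  assumes "successively E w" "w \<noteq> []"
  shows "\<exists>p. distinct p \<and> successively E p \<and> set p \<subseteq> set w \<and> hd p = hd w \<and> last p = last w \<and> p \<noteq> []"
  using assms
proof (induction "length w" arbitrary: w rule: less_induct)
  case less
  show ?case
  proof (cases "distinct w")
    case True then show ?thesis using less by blast
  next
    case False
    then obtain xs a ys zs where w: "w = xs @ [a] @ ys @ [a] @ zs" using not_distinct_decomp by blast
    let ?w = "xs @ [a] @ zs"
    have "successively E ?w" using less(2) unfolding w
      by (auto simp: successively_append_iff successively_Cons)
    moreover have "length ?w < length w" using w by simp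
    ultimately obtain p where "distinct p \<and> successively E p \<and> set p \<subseteq> set ?w \<and> hd p = hd ?w \<and> last p = last ?w \<and> p \<noteq> []"
      using less(1) by blast
    moreover have "hd ?w = hd w" "last ?w = last w" "set ?w \<subseteq> set w" using w by (auto simp: hd_append)
    ultimately show ?thesis by auto
  qed
qed

lemma graph_sym: "graph V E \<Longrightarrow> E x y \<Longrightarrow> E y x"
  unfolding graph_def by blast
lemma graph_V: "graph V E \<Longrightarrow> E x y \<Longrightarrow> x \<in> V \<and> y \<in> V"
  unfolding graph_def by blast
lemma graph_irr: "graph V E \<Longrightarrow> E x y \<Longrightarrow> x \<noteq> y"
  unfolding graph_def by blast

lemma path_unique:
  assumes T: "tree V E" and "is_path V E p" "is_path V E q" "hd p = hd q" "last p = last q"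
  shows "p = q"
  using assms(2-)
proof (induction p arbitrary: q)
  case Nil then show ?case by (simp add: is_path_def)
next
  case (Cons u p')
  have G: "graph V E" using T by (simp add: tree_def)
  obtain q' where q: "q = u # q'" using Cons.prems by (cases q) (auto simp: is_path_def)
  have dp: "distinct (u#p')" "successively E (u#p')" "set (u#p') \<subseteq> V" using Cons.prems by (auto simp: is_path_alt)
  have dq: "distinct (u#q')" "successively E (u#q')" "set (u#q') \<subseteq> V" using Cons.prems q by (auto simp: is_path_alt)
  show ?case
  proof (cases "p' = [] \<or> q' = []")
    case True
    have lst: "last (u#p') = last (u#q')" using Cons.prems q by simp
    show ?thesis
    proof (cases "p' = []")
      case True
      then have "last (u#q') = u" using lst by simp
      then have "q' = []" using dq(1) by (metis distinct.simps(2) last_ConsR last_in_set)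
      then show ?thesis using True q by simp
    next
      case False
      then have "q' = []" using \<open>p' = [] \<or> q' = []\<close> by simp
      then have "last (u#p') = u" using lst by simp
      then have "p' = []" using dp(1) by (metis distinct.simps(2) last_ConsR last_in_set)
      then show ?thesis using False by simp
    qed
  next
    case False
    then have ne: "p' \<noteq> []" "q' \<noteq> []" by auto
    show ?thesis
    proof (cases "hd p' = hd q'")
      case True
      have "is_path V E p'" "is_path V E q'" using ne dp dq
        by (auto simp: is_path_alt successively_Cons)
      moreover have "last p' = last q'" using Cons.prems q ne by simp
      ultimately have "p' = q'" using Cons.IH True by blast
      then show ?thesis using q by simp
    next
      case False
      have "last p' = last q'" using Cons.prems q ne by simp
      then have "\<exists>z\<in>set p'. z \<in> set q'" using ne by (metis last_in_set)
      then obtain A c R where p': "p' = A @ c # R" and cq: "c \<in> set q'" and Aq: "\<forall>y\<in>set A. y \<notin> set q'"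
        using split_list_first_prop[of p' "\<lambda>z. z \<in> set q'"] by blast
      obtain B R' where q': "q' = B @ c # R'" using cq split_list by metis
      define cyc where "cyc = u # A @ [c] @ rev B"
      have "successively E ((u # A @ [c]) @ R)" using dp(2) p' by simp
      then have s1: "successively E (u # A @ [c])" using successively_append_iff[of E "u#A@[c]" R] by blast
      have "successively E ((B @ [c]) @ R')" using dq(2) q' by (simp add: successively_Cons)
      then have "successively E (B @ [c])" using successively_append_iff[of E "B@[c]" R'] by blast
      then have "successively (\<lambda>x y. E y x) (B @ [c])"
        using graph_sym[OF G] by (rule successively_mono) 
      then have s2: "successively E (c # rev B)" using successively_rev[of E "B@[c]"] by simp
      have s1': "successively E (u#A) \<and> E (last (u#A)) c"
        using s1 successively_append_iff[of E "u#A" "[c]"] by simp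
      have "successively E ((u # A) @ (c # rev B))"
        using s1' s2 successively_append_iff[of E "u#A" "c # rev B"] by simp
      then have sc: "successively E cyc" unfolding cyc_def by simp
      have dc: "distinct cyc"
      proof -
        have "distinct (u#p')" "distinct (u#q')" by fact+
        then have "u \<notin> set A" "u \<noteq> c" "u \<notin> set B" "distinct A" "c \<notin> set A" "distinct B" "c \<notin> set B"
          using Aq cq unfolding p' q' by auto
        moreover have "set A \<inter> set B = {}" using Aq q' by auto
        ultimately show ?thesis unfolding cyc_def by auto
      qed
      have vc: "set cyc \<subseteq> V" using dp(3) dq(3) unfolding cyc_def p' q' by auto
      have lc: "length cyc \<ge> 3"
      proof -
        have "A \<noteq> [] \<or> B \<noteq> []" using False p' q' by auto
        then show ?thesis unfolding cyc_def by (auto simp: Suc_le_eq)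
      qed
      have ec: "E (last cyc) (hd cyc)"
      proof (cases B)
        case Nil
        then have "E u c" using dq(2) q' by simp
        then show ?thesis using Nil graph_sym[OF G] unfolding cyc_def by simp
      next
        case (Cons b B')
        then have "E u b" using dq(2) q' by simp
        then show ?thesis using Cons graph_sym[OF G] unfolding cyc_def by (simp add: last_rev)
      qed
      have "is_cycle V E cyc" unfolding is_cycle_def is_path_alt using sc dc vc lc ec
        by (auto simp: cyc_def)
      then show ?thesis using T by (auto simp: tree_def)
    qed
  qed
qed



locale rtree =
  fixes V :: "'v set" and E :: "'v \<Rightarrow> 'v \<Rightarrow> bool" and r :: 'v
  assumes T: "tree V E" and rV: "r \<in> V"
begin

lemma G: "graph V E" using T by (simp add: tree_def)

definition rp :: "'v \<Rightarrow> 'v list" where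
  "rp v = (THE p. is_path V E p \<and> hd p = r \<and> last p = v)"

lemma rp_path: assumes "v \<in> V" shows "is_path V E (rp v)" "hd (rp v) = r" "last (rp v) = v"
proof -
  have "connected_set V E V" using T by (simp add: tree_def)
  then obtain p where p: "is_path V E p \<and> hd p = r \<and> last p = v"
    using rV assms unfolding connected_set_def by blast
  have "is_path V E (rp v) \<and> hd (rp v) = r \<and> last (rp v) = v"
    unfolding rp_def
    proof (rule theI[of _ p])
    show "is_path V E p \<and> hd p = r \<and> last p = v" by (rule p)
    fix q assume "is_path V E q \<and> hd q = r \<and> last q = v"
    then show "q = p" using p path_unique[OF T, of q p] by simp
  qed
  then show "is_path V E (rp v)" "hd (rp v) = r" "last (rp v) = v" by auto
qed

lemma rp_eq: assumes "is_path V E p" "hd p = r" shows "rp (last p) = p"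
proof -
  have "last p \<in> V" using assms by (auto simp: is_path_def)
  then have "is_path V E (rp (last p))" "hd (rp (last p)) = r" "last (rp (last p)) = last p"
    using rp_path by auto
  then show ?thesis using path_unique[OF T, of "rp (last p)" p] assms by simp
qed

lemma rp_alt: assumes "v \<in> V"
  shows "rp v \<noteq> []" "set (rp v) \<subseteq> V" "distinct (rp v)" "successively E (rp v)"
  using rp_path[OF assms] by (auto simp: is_path_alt)

lemma path_take: assumes "is_path V E p" "j < length p"
  shows "is_path V E (take (Suc j) p)"
proof -
  have "successively E (take (Suc j) p @ drop (Suc j) p)" using assms by (simp add: is_path_alt)
  then have "successively E (take (Suc j) p)" using successively_append_iff by blast
  moreover have "set (take (Suc j) p) \<subseteq> set p" by (rule set_take_subset)
  ultimately show ?thesis using assms by (auto simp: is_path_alt)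
qed

lemma rp_take: assumes "v \<in> V" "j < length (rp v)"
  shows "rp (rp v ! j) = take (Suc j) (rp v)"
proof -
  have p: "is_path V E (take (Suc j) (rp v))" using path_take rp_path(1)[OF assms(1)] assms(2) by blast
  have h: "hd (take (Suc j) (rp v)) = r" using rp_path(2)[OF assms(1)] assms(2)
    by (simp add: hd_take)
  have l: "last (take (Suc j) (rp v)) = rp v ! j" using assms(2)
    by (simp add: take_Suc_conv_app_nth)
  show ?thesis using rp_eq[OF p h] l by simp
qed

lemma rp_mem: assumes "v \<in> V" "t \<in> set (rp v)"
  shows "\<exists>k<length (rp v). rp v ! k = t \<and> rp t = take (Suc k) (rp v)"
proof -
  obtain k where "k < length (rp v)" "rp v ! k = t" using assms(2) by (auto simp: in_set_conv_nth)
  then show ?thesis using rp_take[OF assms(1)] by blast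
qed

lemma rp_trans: assumes "v \<in> V" "t \<in> set (rp v)" "s \<in> set (rp t)" shows "s \<in> set (rp v)"
proof -
  obtain k where "rp t = take (Suc k) (rp v)" using rp_mem[OF assms(1,2)] by blast
  then show ?thesis using assms(3) by (metis in_set_takeD)
qed

lemma rp_len_le: assumes "v \<in> V" "t \<in> set (rp v)" shows "length (rp t) \<le> length (rp v)"
  using rp_mem[OF assms] by auto

lemma rp_last_in: "v \<in> V \<Longrightarrow> v \<in> set (rp v)"
  using rp_path rp_alt by (metis last_in_set)

lemma rp_hd_in: "v \<in> V \<Longrightarrow> r \<in> set (rp v)"
  using rp_path rp_alt by (metis hd_in_set)

lemma tree_le_iff: "tree_le V E r u v \<longleftrightarrow> v \<in> V \<and> u \<in> set (rp v)"
proof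
  assume "tree_le V E r u v"
  then obtain p where p: "is_path V E p" "hd p = r" "last p = v" "u \<in> set p"
    unfolding tree_le_def by blast
  then have "rp v = p" using rp_eq by blast
  moreover have "v \<in> V" using p by (auto simp: is_path_def)
  ultimately show "v \<in> V \<and> u \<in> set (rp v)" using p by simp
next
  assume "v \<in> V \<and> u \<in> set (rp v)"
  then show "tree_le V E r u v" unfolding tree_le_def using rp_path by blast
qed

lemma rp_extend: assumes "v \<in> V" "E v w" "w \<notin> set (rp v)" shows "rp w = rp v @ [w]"
proof -
  have "is_path V E (rp v @ [w])"
    using rp_alt[OF assms(1)] rp_path[OF assms(1)] assms graph_V[OF G]
    by (auto simp: is_path_alt successively_append_iff)
  moreover have "hd (rp v @ [w]) = r" using rp_path[OF assms(1)] rp_alt[OF assms(1)] by simp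
  ultimately show ?thesis using rp_eq by fastforce
qed

lemma rp_adj: assumes "E a b" shows "rp b = rp a @ [b] \<or> rp a = rp b @ [a]"
proof -
  have ab: "a \<in> V" "b \<in> V" "a \<noteq> b" "E b a" using assms graph_V[OF G] graph_irr[OF G] graph_sym[OF G] by blast+
  show ?thesis
  proof (cases "b \<in> set (rp a)")
    case False then show ?thesis using rp_extend ab assms by blast
  next
    case True
    then obtain k where k: "k < length (rp a)" "rp a ! k = b" "rp b = take (Suc k) (rp a)"
      using rp_mem ab by blast
    have "rp a ! (length (rp a) - 1) = a" using rp_path(3)[OF ab(1)] rp_alt[OF ab(1)]
      by (simp add: last_conv_nth)
    have "k \<noteq> length (rp a) - 1" using k ab \<open>rp a ! (length (rp a) - 1) = a\<close> by auto
    then have kk: "Suc k < length (rp a)" using k by linarith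
    have "a \<notin> set (take (Suc k) (rp a))"
    proof
      assume "a \<in> set (take (Suc k) (rp a))"
      then obtain i where i: "i < Suc k" "rp a ! i = a" using kk by (auto simp: in_set_conv_nth)
      have "i = length (rp a) - 1"
        using nth_eq_iff_index_eq[OF rp_alt(3)[OF ab(1)], of i "length (rp a) - 1"] i kk
          \<open>rp a ! (length (rp a) - 1) = a\<close> by simp
      then show False using i kk by simp
    qed
    then have "a \<notin> set (rp b)" using k by simp
    then show ?thesis using rp_extend ab by blast
  qed
qed

lemma children_iff: assumes "x \<in> V"
  shows "y \<in> children V E r x \<longleftrightarrow> E x y \<and> rp y = rp x @ [y]"
proof
  assume "y \<in> children V E r x"
  then have y: "E x y" "y \<in> V" "x \<in> set (rp y)" "x \<noteq> y" unfolding children_def tree_le_iff by auto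
  have "length (rp x) \<le> length (rp y)" using rp_len_le y by blast
  then show "E x y \<and> rp y = rp x @ [y]" using rp_adj[OF y(1)] y(1) by auto
next
  assume a: "E x y \<and> rp y = rp x @ [y]"
  then have "y \<in> V" "x \<noteq> y" using graph_V[OF G] graph_irr[OF G] by blast+
  then show "y \<in> children V E r x" using a rp_last_in[OF assms] unfolding children_def tree_le_iff by auto
qed

end


lemma ray_equiv_refl: "ray_equiv f f"
  unfolding ray_equiv_def by (rule exI[of _ 0], rule exI[of _ 0]) simp

lemma ray_equiv_sym: "ray_equiv f g \<Longrightarrow> ray_equiv g f"
  unfolding ray_equiv_def by metis

lemma ray_equiv_trans: assumes "ray_equiv f g" "ray_equiv g h" shows "ray_equiv f h"
proof -
  obtain i j where 1: "\<And>k. f (i + k) = g (j + k)" using assms(1) unfolding ray_equiv_def by blast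
  obtain i' j' where 2: "\<And>k. g (i' + k) = h (j' + k)" using assms(2) unfolding ray_equiv_def by blast
  have "\<And>k. f (i + i' + k) = h (j' + j + k)"
  proof -
    fix k
    have "f (i + i' + k) = g (j + (i' + k))" using 1[of "i' + k"] by (simp add: add.assoc)
    also have "\<dots> = g (i' + (j + k))" by (simp add: algebra_simps)
    also have "\<dots> = h (j' + j + k)" using 2[of "j + k"] by (simp add: add.assoc)
    finally show "f (i + i' + k) = h (j' + j + k)" .
  qed
  then show ?thesis unfolding ray_equiv_def by blast
qed

lemma ends_mem: assumes "\<omega> \<in> ends V E" "g \<in> \<omega>"
  shows "is_ray V E g" "\<And>h. h \<in> \<omega> \<longleftrightarrow> is_ray V E h \<and> ray_equiv g h"
proof -
  obtain f where f: "is_ray V E f" "\<omega> = {g. is_ray V E g \<and> ray_equiv f g}"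
    using assms(1) unfolding ends_def by blast
  show "is_ray V E g" using assms(2) f by blast
  fix h
  show "h \<in> \<omega> \<longleftrightarrow> is_ray V E h \<and> ray_equiv g h"
    using assms(2) f ray_equiv_trans ray_equiv_sym by blast
qed

lemma ends_ne: assumes "\<omega> \<in> ends V E" shows "\<exists>f. f \<in> \<omega>"
proof -
  obtain f where f: "is_ray V E f" "\<omega> = {g. is_ray V E g \<and> ray_equiv f g}"
    using assms(1) unfolding ends_def by blast
  then have "f \<in> \<omega>" using ray_equiv_refl by blast
  then show ?thesis by blast
qed

lemma ray_tail: assumes "is_ray V E f" shows "is_ray V E (\<lambda>k. f (n + k))" "ray_equiv f (\<lambda>k. f (n + k))"
proof -
  show "is_ray V E (\<lambda>k. f (n + k))" using assms unfolding is_ray_def inj_def by (auto simp del: upt_Suc) (metis add_left_cancel)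
  show "ray_equiv f (\<lambda>k. f (n + k))" unfolding ray_equiv_def by (rule exI[of _ n], rule exI[of _ 0]) simp
qed

context rtree begin

lemma ray_from_r: assumes "is_ray V E g" "g 0 = r" shows "rp (g n) = map g [0..<Suc n]"
proof -
  have "is_path V E (map g [0..<Suc n])"
    using assms(1) unfolding is_path_def is_ray_def
    by (auto simp: distinct_map inj_on_def inj_def nth_append simp del: upt_Suc)
  moreover have "hd (map g [0..<Suc n]) = r" using assms(2) by (simp add: hd_map del: upt_Suc)
  ultimately have "rp (last (map g [0..<Suc n])) = map g [0..<Suc n]" using rp_eq by blast
  then show ?thesis by simp
qed

lemma ray_from_r_mem: assumes "is_ray V E g" "g 0 = r" shows "t \<in> set (rp (g n)) \<longleftrightarrow> (\<exists>k\<le>n. g k = t)"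
proof -
  have "set (map g [0..<Suc n]) = g ` {0..n}"
    by (simp only: set_map set_upt atLeastLessThanSuc_atLeastAtMost)
  then show ?thesis using ray_from_r[OF assms, of n] by (simp del: upt_Suc) (auto simp: image_iff)
qed

end


context rtree begin

lemma normal_ray: assumes f: "is_ray V E f" shows "\<exists>g. is_ray V E g \<and> g 0 = r \<and> ray_equiv f g"
proof -
  have fV: "f n \<in> V" for n using f unfolding is_ray_def by blast
  have adj: "E (f n) (f (Suc n))" for n using f unfolding is_ray_def by blast
  have finj: "f a = f b \<Longrightarrow> a = b" for a b using f unfolding is_ray_def inj_def by blast
  define up where "up n \<longleftrightarrow> rp (f (Suc n)) = rp (f n) @ [f (Suc n)]" for n
  have dn: "\<not> up n \<Longrightarrow> rp (f n) = rp (f (Suc n)) @ [f n]" for n using rp_adj[OF adj[of n]] unfolding up_def by blast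
  have upS: "up n \<Longrightarrow> up (Suc n)" for n
  proof (rule ccontr)
    assume a: "up n" "\<not> up (Suc n)"
    then have "rp (f (Suc n)) = rp (f (Suc (Suc n))) @ [f (Suc n)]" "rp (f (Suc n)) = rp (f n) @ [f (Suc n)]"
      using dn[of "Suc n"] unfolding up_def by auto
    then have "rp (f (Suc (Suc n))) = rp (f n)" by simp
    then have "last (rp (f (Suc (Suc n)))) = last (rp (f n))" by simp
    then have "f (Suc (Suc n)) = f n" using rp_path(3)[OF fV] by simp
    then have "Suc (Suc n) = n" by (rule finj)
    then show False by simp
  qed
  have "\<exists>m. up m"
  proof (rule ccontr)
    assume "\<nexists>m. up m"
    then have lt: "length (rp (f (Suc n))) < length (rp (f n))" for n using dn[of n] by auto
    have "length (rp (f n)) + n \<le> length (rp (f 0))" for n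
    proof (induction n)
      case 0 then show ?case by simp
    next
      case (Suc n) then show ?case using lt[of n] by simp
    qed
    from this[of "Suc (length (rp (f 0)))"] show False by simp
  qed
  then obtain m where "up m" by blast
  have upm: "up (m + j)" for j by (induction j) (use \<open>up m\<close> upS in auto)
  define L where "L = length (rp (f m))"
  have L1: "L \<ge> 1" using rp_alt(1)[OF fV[of m]] L_def by (simp add: Suc_le_eq)
  define g where "g k = (if k < L then rp (f m) ! k else f (m + (k + 1 - L)))" for k
  have P: "rp (f (m + j)) = map g [0..<L + j]" for j
  proof (induction j)
    case 0
    have "map g [0..<L] = map (\<lambda>k. rp (f m) ! k) [0..<L]" by (rule map_cong) (auto simp: g_def)
    also have "\<dots> = rp (f m)" unfolding L_def by (rule map_nth)
    finally show ?case by simp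
  next
    case (Suc j)
    have "rp (f (m + Suc j)) = rp (f (m + j)) @ [f (m + Suc j)]" using upm[of j] unfolding up_def by simp
    also have "\<dots> = map g [0..<L + j] @ [g (L + j)]" using Suc L1 by (simp add: g_def)
    also have "\<dots> = map g [0..<L + Suc j]" by simp
    finally show ?case .
  qed
  have gin: "k < L + j \<Longrightarrow> g k \<in> set (rp (f (m + j)))" for k j using P[of j] by simp
  have gray: "is_ray V E g" unfolding is_ray_def
  proof (intro conjI)
    show "inj g"
    proof (rule injI)
      fix a b assume ab: "g a = g b"
      have "distinct (rp (f (m + (a + b + 1))))" using rp_alt(3)[OF fV] by blast
      then have "distinct (map g [0..<L + (a + b + 1)])" unfolding P .
      then have "inj_on g {0..<L + (a + b + 1)}" by (simp add: distinct_map del: upt_Suc)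
      then show "a = b" using ab unfolding inj_on_def by auto
    qed
    show "range g \<subseteq> V"
    proof
      fix y assume "y \<in> range g"
      then obtain k where "y = g k" by blast
      then have "y \<in> set (rp (f (m + k)))" using gin[of k k] L1 by simp
      then show "y \<in> V" using rp_alt(2)[OF fV] by blast
    qed
    show "\<forall>i. E (g i) (g (Suc i))"
    proof
      fix i
      have "is_path V E (rp (f (m + Suc i)))" using rp_path(1)[OF fV] by blast
      then have "is_path V E (map g [0..<L + Suc i])" unfolding P .
      then have "E (map g [0..<L + Suc i] ! i) (map g [0..<L + Suc i] ! Suc i)"
        unfolding is_path_def using L1 by auto
      then show "E (g i) (g (Suc i))" using L1
        by (simp del: upt_Suc)
    qed
  qed
  have g0: "g 0 = r" using L1 rp_path(2)[OF fV[of m]] rp_alt(1)[OF fV[of m]]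
    by (simp add: g_def hd_conv_nth)
  have "f (m + k) = g (L - 1 + k)" for k
  proof -
    have "f (m + k) = last (rp (f (m + k)))" using rp_path(3)[OF fV] by simp
    also have "\<dots> = last (map g [0..<L + k])" using P by simp
    also have "\<dots> = g (L - 1 + k)" using L1 by (simp add: last_map)
    finally show ?thesis .
  qed
  then have "ray_equiv f g" unfolding ray_equiv_def by blast
  then show ?thesis using gray g0 by blast
qed

lemma normal_in_end: assumes "\<omega> \<in> ends V E" shows "\<exists>g\<in>\<omega>. g 0 = r \<and> is_ray V E g"
proof -
  obtain f where f: "f \<in> \<omega>" using ends_ne[OF assms] by blast
  then have "is_ray V E f" using ends_mem[OF assms] by blast
  then obtain g where "is_ray V E g" "g 0 = r" "ray_equiv f g" using normal_ray by blast
  then show ?thesis using ends_mem(2)[OF assms f] by blast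
qed

end


context rtree begin

definition walk :: "'v set \<Rightarrow> 'v \<Rightarrow> 'v \<Rightarrow> bool" where
  "walk S u v \<longleftrightarrow> (\<exists>w. w \<noteq> [] \<and> successively E w \<and> set w \<subseteq> S \<and> hd w = u \<and> last w = v)"

lemma walk_sym: "walk S u v \<Longrightarrow> walk S v u"
proof -
  assume "walk S u v"
  then obtain w where w: "w \<noteq> []" "successively E w" "set w \<subseteq> S" "hd w = u" "last w = v"
    unfolding walk_def by blast
  have "successively (\<lambda>x y. E y x) w" using w(2) graph_sym[OF G] by (rule successively_mono)
  then have "successively E (rev w)" by simp
  then show "walk S v u" unfolding walk_def using w
    by (intro exI[of _ "rev w"]) (auto simp: hd_rev last_rev)
qed

lemma walk_trans: "walk S u v \<Longrightarrow> walk S v z \<Longrightarrow> walk S u z"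
proof -
  assume "walk S u v" "walk S v z"
  then obtain w1 w2 where w1: "w1 \<noteq> []" "successively E w1" "set w1 \<subseteq> S" "hd w1 = u" "last w1 = v"
    and w2: "w2 \<noteq> []" "successively E w2" "set w2 \<subseteq> S" "hd w2 = v" "last w2 = z"
    unfolding walk_def by blast
  show "walk S u z"
  proof (cases "tl w2 = []")
    case True
    then have "z = v" using w2 by (metis last_ConsL list.collapse)
    then show ?thesis using w1 unfolding walk_def by blast
  next
    case False
    have w2': "w2 = v # tl w2" using w2 by (metis list.collapse)
    then have "E v (hd (tl w2))" "successively E (tl w2)" using w2(2) False
      by (metis successively_Cons)+
    then have "successively E (w1 @ tl w2)" using w1 False by (auto simp: successively_append_iff)
    moreover have "set (w1 @ tl w2) \<subseteq> S" using w1 w2 w2' by (auto simp: set_eq_iff) (metis list.set_sel(2) subsetD False)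
    moreover have "last (w1 @ tl w2) = z" using False w2 w2' by (metis last_ConsR last_appendR)
    ultimately show ?thesis unfolding walk_def using w1
      by (intro exI[of _ "w1 @ tl w2"]) auto
  qed
qed

lemma hub_connected:
  assumes "S \<subseteq> V" "c \<in> S" "\<And>v. v \<in> S \<Longrightarrow> walk S c v"
  shows "connected_set V E S"
  unfolding connected_set_def
proof (intro conjI ballI)
  show "S \<subseteq> V" by fact
  fix u v assume "u \<in> S" "v \<in> S"
  then have "walk S u v" using assms walk_sym walk_trans by blast
  then obtain w where w: "w \<noteq> []" "successively E w" "set w \<subseteq> S" "hd w = u" "last w = v"
    unfolding walk_def by blast
  then obtain p where "distinct p \<and> successively E p \<and> set p \<subseteq> set w \<and> hd p = hd w \<and> last p = last w \<and> p \<noteq> []"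
    using walk_to_path by blast
  then show "\<exists>p. is_path V E p \<and> set p \<subseteq> S \<and> hd p = u \<and> last p = v"
    using w assms(1) by (intro exI[of _ p]) (auto simp: is_path_alt)
qed

lemma drop_walk:
  assumes "v \<in> V" "k < length (rp v)"
  shows "successively E (drop k (rp v))" "drop k (rp v) \<noteq> []" "hd (drop k (rp v)) = rp v ! k"
    "last (drop k (rp v)) = v"
    "\<And>w. w \<in> set (drop k (rp v)) \<Longrightarrow> w \<in> V \<and> (\<exists>j. k \<le> j \<and> j < length (rp v) \<and> rp w = take (Suc j) (rp v) \<and> rp v ! j = w)"
proof -
  have s: "successively E (take k (rp v) @ drop k (rp v))" using rp_alt(4)[OF assms(1)] by simp
  show "successively E (drop k (rp v))" using s successively_append_iff by blast
  show "drop k (rp v) \<noteq> []" using assms by simp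
  show "hd (drop k (rp v)) = rp v ! k" using assms by (simp add: hd_drop_conv_nth)
  show "last (drop k (rp v)) = v" using assms rp_path(3)[OF assms(1)] by simp
  fix w assume "w \<in> set (drop k (rp v))"
  then obtain i where i: "i < length (rp v) - k" "drop k (rp v) ! i = w" by (auto simp: in_set_conv_nth)
  then have "rp v ! (k + i) = w" "k + i < length (rp v)" by auto
  moreover have "w \<in> V" using rp_alt(2)[OF assms(1)] \<open>w \<in> set (drop k (rp v))\<close> by (meson in_set_dropD subsetD)
  ultimately show "w \<in> V \<and> (\<exists>j. k \<le> j \<and> j < length (rp v) \<and> rp w = take (Suc j) (rp v) \<and> rp v ! j = w)"
    using rp_take[OF assms(1)] by (metis le_add1)
qed

lemma leave_lemma:
  assumes "successively E w" "w \<noteq> []" "hd w \<in> S" "last w \<notin> S"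
  shows "\<exists>a b. a \<in> S \<and> b \<notin> S \<and> E a b \<and> b \<in> set w"
  using assms
proof (induction w)
  case Nil then show ?case by simp
next
  case (Cons a w)
  show ?case
  proof (cases w)
    case Nil then show ?thesis using Cons by simp
  next
    case (Cons b w')
    show ?thesis
    proof (cases "b \<in> S")
      case True
      then have "\<exists>a b. a \<in> S \<and> b \<notin> S \<and> E a b \<and> b \<in> set w"
        using Cons.IH Cons.prems Cons by auto
      then show ?thesis by auto
    next
      case False
      then show ?thesis using Cons.prems Cons by auto
    qed
  qed
qed

definition sub :: "'v \<Rightarrow> 'v set" where "sub t = {v \<in> V. t \<in> set (rp v)}"

definition ch :: "'v \<Rightarrow> 'v \<Rightarrow> 'v" where "ch x v = rp v ! length (rp x)"

definition UF :: "'v \<Rightarrow> 'v set \<Rightarrow> 'v set" where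
  "UF x F = {v \<in> V. x \<in> set (rp v) \<and> (v = x \<or> ch x v \<notin> F)}"

lemma rp_prefix: assumes "v \<in> V" "x \<in> set (rp v)" shows "rp x = take (length (rp x)) (rp v)"
  using rp_mem[OF assms] by auto

lemma rp_len_less: assumes "v \<in> V" "x \<in> set (rp v)" "v \<noteq> x" shows "length (rp x) < length (rp v)"
proof -
  obtain k where k: "k < length (rp v)" "rp v ! k = x" "rp x = take (Suc k) (rp v)" using rp_mem[OF assms(1,2)] by blast
  have "rp v ! (length (rp v) - 1) = v" using rp_path(3)[OF assms(1)] rp_alt(1)[OF assms(1)] by (simp add: last_conv_nth)
  then have "k \<noteq> length (rp v) - 1" using k assms(3) by auto
  then show ?thesis using k by simp
qed

lemma ch_child: assumes "v \<in> V" "x \<in> set (rp v)" "v \<noteq> x"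
  shows "ch x v \<in> children V E r x" "v \<in> sub (ch x v)" "rp (ch x v) = rp x @ [ch x v]"
proof -
  have xV: "x \<in> V" using assms rp_alt(2) by blast
  have l: "length (rp x) < length (rp v)" using rp_len_less[OF assms] .
  have pre: "rp x = take (length (rp x)) (rp v)" using rp_prefix[OF assms(1,2)] .
  have "rp (ch x v) = take (Suc (length (rp x))) (rp v)" unfolding ch_def using rp_take[OF assms(1) l] .
  also have "\<dots> = rp x @ [ch x v]" using l pre by (simp add: take_Suc_conv_app_nth ch_def)
  finally show rpc: "rp (ch x v) = rp x @ [ch x v]" .
  have lx: "length (rp x) \<ge> 1" using rp_alt(1)[OF xV] by (simp add: Suc_le_eq)
  have "E (rp v ! (length (rp x) - 1)) (rp v ! Suc (length (rp x) - 1))"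
    using rp_path(1)[OF assms(1)] l lx unfolding is_path_def by simp
  moreover have "rp v ! (length (rp x) - 1) = x"
  proof -
    have "rp v ! (length (rp x) - 1) = rp x ! (length (rp x) - 1)" using pre lx l
      by (metis diff_less less_numeral_extra(1) nth_take order_less_le_trans)
    also have "\<dots> = x" using rp_path(3)[OF xV] rp_alt(1)[OF xV] by (simp add: last_conv_nth)
    finally show ?thesis .
  qed
  moreover have "Suc (length (rp x) - 1) = length (rp x)" using lx by simp
  ultimately have "E x (ch x v)" unfolding ch_def by metis
  then show "ch x v \<in> children V E r x" using children_iff[OF xV] rpc by blast
  show "v \<in> sub (ch x v)" unfolding sub_def ch_def using assms(1) l by simp
qed

lemma child_sub: assumes "x \<in> V" "t \<in> children V E r x" "v \<in> sub t"
  shows "v \<noteq> x" "x \<in> set (rp v)" "ch x v = t"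
proof -
  have t: "E x t" "rp t = rp x @ [t]" using children_iff[OF assms(1)] assms(2) by auto
  have v: "v \<in> V" "t \<in> set (rp v)" using assms(3) sub_def by auto
  show "x \<in> set (rp v)" using rp_trans[OF v] t rp_last_in[OF assms(1)] by simp
  have "t \<notin> set (rp x)" using rp_alt(3)[of t] t(2) v rp_alt(2) by (metis distinct_append not_distinct_conv_prefix subsetD distinct1_rotate rotate1.simps(2))
  then show "v \<noteq> x" using v by auto
  have "rp t = take (length (rp t)) (rp v)" using rp_prefix[OF v] .
  then have "rp v ! length (rp x) = t" using t(2) 
    by (metis length_append_singleton lessI nth_append_length nth_take)
  then show "ch x v = t" unfolding ch_def .
qed

lemma sub_UF: assumes "x \<in> V" "t \<in> children V E r x" "t \<notin> F" shows "sub t \<subseteq> UF x F"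
  using child_sub[OF assms(1,2)] assms(3) unfolding UF_def sub_def by auto

lemma sub_UF_disj: assumes "x \<in> V" "t \<in> children V E r x" shows "sub t \<inter> UF x {t} = {}"
  using child_sub[OF assms(1,2)] unfolding UF_def by auto

lemma UF_anti: "F \<subseteq> F' \<Longrightarrow> UF x F' \<subseteq> UF x F"
  unfolding UF_def by auto

lemma sub_region: assumes "t \<in> V" shows "region V E (sub t)"
  unfolding region_def
proof (intro conjI)
  show "sub t \<noteq> {}" using rp_last_in[OF assms] assms unfolding sub_def by blast
  show "connected_set V E (sub t)"
  proof (rule hub_connected)
    show "sub t \<subseteq> V" unfolding sub_def by blast
    show "t \<in> sub t" using rp_last_in[OF assms] assms unfolding sub_def by blast
    fix v assume v: "v \<in> sub t"
    then obtain k where k: "k < length (rp v)" "rp v ! k = t" using sub_def by (auto simp: in_set_conv_nth)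
    have vV: "v \<in> V" using v sub_def by blast
    note d = drop_walk[OF vV k(1)]
    have "set (drop k (rp v)) \<subseteq> sub t"
    proof
      fix w assume "w \<in> set (drop k (rp v))"
      then obtain j where "w \<in> V" "k \<le> j" "j < length (rp v)" "rp w = take (Suc j) (rp v)"
        using d(5) by blast
      then show "w \<in> sub t" unfolding sub_def using k by (auto simp: in_set_conv_nth intro!: exI[of _ k])
    qed
    then show "walk (sub t) t v" unfolding walk_def using d k by blast
  qed
  show "finite {(a, b). a \<in> sub t \<and> b \<notin> sub t \<and> E a b}"
  proof (rule finite_subset)
    show "{(a, b). a \<in> sub t \<and> b \<notin> sub t \<and> E a b} \<subseteq> {(t, last (butlast (rp t)))}"
    proof clarify
      fix a b assume ab: "a \<in> sub t" "b \<notin> sub t" "E a b"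
      have V: "a \<in> V" "b \<in> V" using ab graph_V[OF G] by blast+
      have ta: "t \<in> set (rp a)" using ab sub_def by blast
      show "a = t \<and> b = last (butlast (rp t))"
      proof (cases "rp b = rp a @ [b]")
        case True then show ?thesis using ta ab V sub_def by auto
      next
        case False
        then have ra: "rp a = rp b @ [a]" using rp_adj[OF ab(3)] by blast
        have "t \<notin> set (rp b)" using ab V sub_def by auto
        then have "t = a" using ta ra by auto
        moreover have "last (rp b) = b" using rp_path(3)[OF V(2)] .
        ultimately show ?thesis using ra by simp
      qed
    qed
  qed simp
qed

lemma UF_region: assumes xV: "x \<in> V" and fin: "finite F" shows "region V E (UF x F)"
  unfolding region_def
proof (intro conjI)
  have xU: "x \<in> UF x F" using rp_last_in[OF xV] xV unfolding UF_def by blast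
  then show "UF x F \<noteq> {}" by blast
  show "connected_set V E (UF x F)"
  proof (rule hub_connected)
    show "UF x F \<subseteq> V" unfolding UF_def by blast
    show "x \<in> UF x F" by (rule xU)
    fix v assume v: "v \<in> UF x F"
    then have vV: "v \<in> V" and xv: "x \<in> set (rp v)" unfolding UF_def by auto
    obtain k where k: "k < length (rp v)" "rp v ! k = x" "rp x = take (Suc k) (rp v)" using rp_mem[OF vV xv] by blast
    have lk: "length (rp x) = Suc k" using k by simp
    note d = drop_walk[OF vV k(1)]
    have "set (drop k (rp v)) \<subseteq> UF x F"
    proof
      fix w assume "w \<in> set (drop k (rp v))"
      then obtain j where j: "w \<in> V" "k \<le> j" "j < length (rp v)" "rp w = take (Suc j) (rp v)" "rp v ! j = w"
        using d(5) by blast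
      have xw: "x \<in> set (rp w)" using j k by (auto simp: in_set_conv_nth intro!: exI[of _ k])
      show "w \<in> UF x F"
      proof (cases "w = x")
        case True then show ?thesis using xU by simp
      next
        case False
        then have "j \<noteq> k" using j k by auto
        then have jk: "Suc k \<le> j" using j by simp
        have "v \<noteq> x"
        proof
          assume "v = x"
          then have "length (rp v) = Suc k" using lk by simp
          then show False using jk j by simp
        qed
        then have "ch x v \<notin> F" using v unfolding UF_def by blast
        moreover have "ch x w = ch x v" unfolding ch_def lk using j jk by simp
        ultimately show ?thesis using j xw unfolding UF_def by auto
      qed
    qed
    then show "walk (UF x F) x v" unfolding walk_def using d k by blast
  qed
  show "finite {(a, b). a \<in> UF x F \<and> b \<notin> UF x F \<and> E a b}"
  proof (rule finite_subset)
    show "{(a, b). a \<in> UF x F \<and> b \<notin> UF x F \<and> E a b} \<subseteq> Pair x ` (F \<union> {last (butlast (rp x))})"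
    proof clarify
      fix a b assume ab: "a \<in> UF x F" "b \<notin> UF x F" "E a b"
      have V: "a \<in> V" "b \<in> V" using ab graph_V[OF G] by blast+
      have xa: "x \<in> set (rp a)" using ab UF_def by blast
      show "(a, b) \<in> Pair x ` (F \<union> {last (butlast (rp x))})"
      proof (cases "rp b = rp a @ [b]")
        case True
        then have xb: "x \<in> set (rp b)" using xa by simp
        then have bx: "b \<noteq> x" and cb: "ch x b \<in> F" using ab V unfolding UF_def by auto
        show ?thesis
        proof (cases "a = x")
          case True
          then have "ch x b = b" unfolding ch_def using \<open>rp b = rp a @ [b]\<close> by simp
          then show ?thesis using True cb by auto
        next
          case False
          have "length (rp x) < length (rp a)" using rp_len_less[OF V(1) xa] False by simp
          then have "ch x b = ch x a" unfolding ch_def using \<open>rp b = rp a @ [b]\<close> by (simp add: nth_append)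
          then have False using ab False unfolding UF_def using cb by auto
          then show ?thesis ..
        qed
      next
        case False
        then have ra: "rp a = rp b @ [a]" using rp_adj[OF ab(3)] by blast
        show ?thesis
        proof (cases "a = x")
          case True
          have "last (rp b) = b" using rp_path(3)[OF V(2)] .
          then show ?thesis using ra True by simp
        next
          case False
          then have xb: "x \<in> set (rp b)" using xa ra by simp
          have bx: "b \<noteq> x" using ab xU by auto
          have "length (rp x) < length (rp b)" using rp_len_less[OF V(2) xb bx] .
          then have "ch x b = ch x a" unfolding ch_def using ra by (simp add: nth_append)
          then have "b \<in> UF x F" using ab V xb False unfolding UF_def by auto
          then show ?thesis using ab by blast
        qed
      qed
    qed
  qed (use fin in simp)
qed

end


lemma region_points_mono: "S \<subseteq> S' \<Longrightarrow> region_points V E S \<subseteq> region_points V E S'"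
  unfolding region_points_def by (intro Un_mono image_mono Collect_mono) (assumption, blast)

lemma open_region: "region V E S \<Longrightarrow> openin (end_topology V E) (region_points V E S)"
  unfolding end_topology_def by (rule topology_generated_by_Basis) blast

lemma open_gen: "openin (end_topology V E) W \<Longrightarrow> generate_topology_on {region_points V E S | S. region V E S} W"
  unfolding end_topology_def by (rule openin_topology_generated_by)

context rtree begin

lemma vertex_nbhd_basis:
  assumes xV: "x \<in> V" and S: "region V E S" and xS: "x \<in> S"
  shows "\<exists>F. finite F \<and> UF x F \<subseteq> S"
proof -
  define L where "L = {(a, b). a \<in> S \<and> b \<notin> S \<and> E a b}"
  have finL: "finite L" using S unfolding region_def L_def by blast
  define F where "F = {t \<in> children V E r x. \<not> sub t \<subseteq> S}"
  have "F \<subseteq> (\<lambda>p. rp (snd p) ! length (rp x)) ` L"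
  proof
    fix t assume tF: "t \<in> F"
    then obtain v where v: "v \<in> sub t" "v \<notin> S" and tc: "t \<in> children V E r x" unfolding F_def by blast
    note cs = child_sub[OF xV tc v(1)]
    have vV: "v \<in> V" using v sub_def by blast
    obtain k where k: "k < length (rp v)" "rp v ! k = x" "rp x = take (Suc k) (rp v)" using rp_mem[OF vV cs(2)] by blast
    have lk: "length (rp x) = Suc k" using k by simp
    note d = drop_walk[OF vV k(1)]
    have "hd (drop k (rp v)) \<in> S" using d(3) k(2) xS by simp
    moreover have "last (drop k (rp v)) \<notin> S" using d(4) v(2) by simp
    ultimately obtain a b where ab: "a \<in> S" "b \<notin> S" "E a b" "b \<in> set (drop k (rp v))"
      using leave_lemma[OF d(1) d(2)] by blast
    then obtain j where j: "b \<in> V" "k \<le> j" "j < length (rp v)" "rp b = take (Suc j) (rp v)" "rp v ! j = b"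
      using d(5) by blast
    have "j \<noteq> k" using j k ab xS by auto
    then have "rp b ! length (rp x) = rp v ! length (rp x)" using j lk by simp
    also have "\<dots> = t" using cs(3) unfolding ch_def .
    finally have "t = rp (snd (a, b)) ! length (rp x)" by simp
    moreover have "(a, b) \<in> L" using ab unfolding L_def by blast
    ultimately show "t \<in> (\<lambda>p. rp (snd p) ! length (rp x)) ` L" by blast
  qed
  then have "finite F" by (rule finite_subset) (use finL in blast)
  moreover have "UF x F \<subseteq> S"
  proof
    fix v assume v: "v \<in> UF x F"
    show "v \<in> S"
    proof (cases "v = x")
      case True then show ?thesis using xS by simp
    next
      case False
      have vV: "v \<in> V" "x \<in> set (rp v)" "ch x v \<notin> F" using v False unfolding UF_def by auto
      note cc = ch_child[OF vV(1,2) False]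
      then have "sub (ch x v) \<subseteq> S" using vV(3) unfolding F_def by blast
      then show ?thesis using cc by blast
    qed
  qed
  ultimately show ?thesis by blast
qed

lemma vertex_nbhd:
  assumes xV: "x \<in> V" and W: "openin (end_topology V E) W" and xW: "Inl x \<in> W"
  shows "\<exists>F. finite F \<and> region_points V E (UF x F) \<subseteq> W"
  using open_gen[OF W] xW
proof (induction rule: generate_topology_on.induct)
  case Empty then show ?case by simp
next
  case (Int a b)
  then obtain F1 F2 where "finite F1" "region_points V E (UF x F1) \<subseteq> a"
    "finite F2" "region_points V E (UF x F2) \<subseteq> b" by auto
  moreover have "region_points V E (UF x (F1 \<union> F2)) \<subseteq> region_points V E (UF x F1)"
    by (rule region_points_mono, rule UF_anti) simp
  moreover have "region_points V E (UF x (F1 \<union> F2)) \<subseteq> region_points V E (UF x F2)"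
    by (rule region_points_mono, rule UF_anti) simp
  ultimately have "finite (F1 \<union> F2) \<and> region_points V E (UF x (F1 \<union> F2)) \<subseteq> a \<inter> b" by blast
  then show ?case by blast
next
  case (UN K)
  then obtain k where k: "k \<in> K" "Inl x \<in> k" by blast
  then obtain F where "finite F" "region_points V E (UF x F) \<subseteq> k" using UN.IH by blast
  then have "finite F \<and> region_points V E (UF x F) \<subseteq> \<Union>K" using k by blast
  then show ?case by blast
next
  case (Basis s)
  then obtain S where S: "region V E S" "s = region_points V E S" by blast
  then have "x \<in> S" using Basis.prems unfolding region_points_def by auto
  then obtain F where F: "finite F" "UF x F \<subseteq> S" using vertex_nbhd_basis[OF xV S(1)] by blast
  have "region_points V E (UF x F) \<subseteq> s" unfolding S(2) by (rule region_points_mono) (rule F(2))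
  then show ?case using F by blast
qed

lemma sub_anti: assumes g: "is_ray V E g" "g 0 = r" and "n \<le> m" shows "sub (g m) \<subseteq> sub (g n)"
proof
  fix v assume v: "v \<in> sub (g m)"
  have "g n \<in> set (rp (g m))" using ray_from_r_mem[OF g] assms(3) by blast
  then show "v \<in> sub (g n)" using v rp_trans unfolding sub_def by blast
qed

lemma end_nbhd:
  assumes g: "is_ray V E g" "g 0 = r" and om: "\<omega> \<in> ends V E" "g \<in> \<omega>"
    and W: "openin (end_topology V E) W" and oW: "Inr \<omega> \<in> W"
  shows "\<exists>n. region_points V E (sub (g n)) \<subseteq> W"
  using open_gen[OF W] oW
proof (induction rule: generate_topology_on.induct)
  case Empty then show ?case by simp
next
  case (Int a b)
  then obtain n1 n2 where "region_points V E (sub (g n1)) \<subseteq> a" "region_points V E (sub (g n2)) \<subseteq> b" by auto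
  moreover have "sub (g (max n1 n2)) \<subseteq> sub (g n1)" "sub (g (max n1 n2)) \<subseteq> sub (g n2)"
    using sub_anti[OF g] by auto
  moreover have "region_points V E (sub (g (max n1 n2))) \<subseteq> region_points V E (sub (g n1))"
    "region_points V E (sub (g (max n1 n2))) \<subseteq> region_points V E (sub (g n2))"
    using calculation(3,4) by (auto intro: region_points_mono[THEN subsetD])
  ultimately have "region_points V E (sub (g (max n1 n2))) \<subseteq> a \<inter> b" by blast
  then show ?case by blast
next
  case (UN K)
  then obtain k where k: "k \<in> K" "Inr \<omega> \<in> k" by blast
  then obtain n where "region_points V E (sub (g n)) \<subseteq> k" using UN.IH by blast
  then have "region_points V E (sub (g n)) \<subseteq> \<Union>K" using k by blast
  then show ?case by blast
next
  case (Basis s)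
  then obtain S where S: "region V E S" "s = region_points V E S" by blast
  have "Inr \<omega> \<in> region_points V E S" using Basis.prems S(2) by simp
  then have "\<omega> \<in> {\<omega> \<in> ends V E. \<exists>f\<in>\<omega>. range f \<subseteq> S}"
    unfolding region_points_def by (simp add: image_iff)
  then obtain h where h: "h \<in> \<omega>" "range h \<subseteq> S" by blast
  have "ray_equiv g h" using ends_mem(2)[OF om, of h] h(1) by blast
  then obtain i j where ij: "\<And>k. g (i + k) = h (j + k)" unfolding ray_equiv_def by blast
  define L where "L = {(a, b). a \<in> S \<and> b \<notin> S \<and> E a b}"
  have finL: "finite L" using S unfolding region_def L_def by blast
  then have "finite ((\<lambda>p. length (rp (snd p))) ` L)" by (rule finite_imageI)
  then obtain M where M0: "\<forall>m\<in>(\<lambda>p. length (rp (snd p))) ` L. m \<le> M"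
    unfolding finite_nat_set_iff_bounded_le by blast
  have M: "\<And>p. p \<in> L \<Longrightarrow> length (rp (snd p)) \<le> M" using M0 by blast
  define n where "n = i + M"
  have "g n = h (j + M)" using ij[of M] unfolding n_def by simp
  then have gnS: "g n \<in> S" using h(2) by auto
  have "sub (g n) \<subseteq> S"
  proof
    fix v assume v: "v \<in> sub (g n)"
    show "v \<in> S"
    proof (rule ccontr)
      assume vS: "v \<notin> S"
      have vV: "v \<in> V" "g n \<in> set (rp v)" using v sub_def by auto
      obtain k where k: "k < length (rp v)" "rp v ! k = g n" "rp (g n) = take (Suc k) (rp v)"
        using rp_mem[OF vV] by blast
      have "length (rp (g n)) = Suc n" using ray_from_r[OF g, of n] by simp
      then have kn: "k = n" using k(1) k(3) by simp
      note d = drop_walk[OF vV(1) k(1)]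
      have "hd (drop k (rp v)) \<in> S" using d(3) k(2) gnS by simp
      moreover have "last (drop k (rp v)) \<notin> S" using d(4) vS by simp
      ultimately obtain a b where ab: "a \<in> S" "b \<notin> S" "E a b" "b \<in> set (drop k (rp v))"
        using leave_lemma[OF d(1) d(2)] by blast
      then obtain j where j: "k \<le> j" "j < length (rp v)" "rp b = take (Suc j) (rp v)"
        using d(5) by blast
      have "(a, b) \<in> L" using ab L_def by blast
      then have "length (rp b) \<le> M" using M[of "(a, b)"] by simp
      moreover have "length (rp b) = Suc j" using j by simp
      ultimately show False using j(1) kn unfolding n_def by simp
    qed
  qed
  have "region_points V E (sub (g n)) \<subseteq> s" unfolding S(2) by (rule region_points_mono) fact
  then show ?case by blast
qed

lemma end_in_sub:
  assumes g: "is_ray V E g" "g 0 = r" and om: "\<omega> \<in> ends V E" "g \<in> \<omega>"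
  shows "Inr \<omega> \<in> region_points V E (sub (g n))"
proof -
  have "(\<lambda>k. g (n + k)) \<in> \<omega>" using ends_mem(2)[OF om] ray_tail[OF g(1)] by blast
  moreover have "range (\<lambda>k. g (n + k)) \<subseteq> sub (g n)"
  proof clarify
    fix k
    have "g (n + k) \<in> V" using g unfolding is_ray_def by blast
    moreover have "g n \<in> set (rp (g (n + k)))" unfolding ray_from_r_mem[OF g] by (rule exI[of _ n]) simp
    ultimately show "g (n + k) \<in> sub (g n)" unfolding sub_def by blast
  qed
  ultimately have "\<omega> \<in> {\<omega> \<in> ends V E. \<exists>f\<in>\<omega>. range f \<subseteq> sub (g n)}" using om by blast
  then show ?thesis unfolding region_points_def by (rule UnI2[OF imageI])
qed

lemma tail_in_child:
  assumes xV: "x \<in> V" and h: "is_ray V E h" and hU: "range h \<subseteq> UF x G"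
  shows "\<exists>n c. c \<in> children V E r x \<and> c \<notin> G \<and> (\<forall>k. h (n + k) \<in> sub c)"
proof -
  have hinj: "h a = h b \<Longrightarrow> a = b" for a b using h unfolding is_ray_def inj_def by blast
  obtain n where n: "\<And>k. h (n + k) \<noteq> x"
  proof (cases "\<exists>i. h i = x")
    case True
    then obtain i where i: "h i = x" by blast
    have "h (Suc i + k) \<noteq> x" for k using hinj[of "Suc i + k" i] i by auto
    then show ?thesis using that by blast
  next
    case False then show ?thesis using that by blast
  qed
  have U: "h m \<in> V \<and> x \<in> set (rp (h m)) \<and> (h m = x \<or> ch x (h m) \<notin> G)" for m
    using hU unfolding UF_def by blast
  define c where "c = ch x (h n)"
  have cc: "ch x (h (n + k)) = c" for k
  proof (induction k)
    case 0 then show ?case by (simp add: c_def)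
  next
    case (Suc k)
    let ?a = "h (n + k)" and ?b = "h (n + Suc k)"
    have e: "E ?a ?b" using h unfolding is_ray_def by simp
    have la: "length (rp x) < length (rp ?a)" using rp_len_less U n by blast
    have lb: "length (rp x) < length (rp ?b)" using rp_len_less U n by blast
    have "ch x ?b = ch x ?a" using rp_adj[OF e] la lb unfolding ch_def by (auto simp: nth_append)
    then show ?case using Suc by simp
  qed
  have "c \<in> children V E r x" using ch_child(1)[of "h n" x] U n[of 0] c_def by simp
  moreover have "c \<notin> G" using U[of n] n[of 0] c_def by simp
  moreover have "h (n + k) \<in> sub c" for k using ch_child(2)[of "h (n + k)" x] U n cc by metis
  ultimately show ?thesis by blast
qed

lemma end_up:
  assumes om: "\<omega> \<in> ends V E" "h \<in> \<omega>" and hs: "\<And>k. h (n + k) \<in> sub c"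
  shows "\<exists>f\<in>\<omega>. f 0 = r \<and> c \<in> range f"
proof -
  obtain g where g: "g \<in> \<omega>" "g 0 = r" "is_ray V E g" using normal_in_end[OF om(1)] by blast
  have "ray_equiv g h" using ends_mem(2)[OF om(1) g(1)] om(2) by blast
  then obtain i j where ij: "\<And>k. g (i + k) = h (j + k)" unfolding ray_equiv_def by blast
  have "g (i + n) \<in> sub c" using ij[of n] hs[of j] by (simp add: add.commute)
  then have "c \<in> set (rp (g (i + n)))" unfolding sub_def by blast
  then obtain k where "g k = c" using ray_from_r_mem[OF g(3,2)] by blast
  then show ?thesis using g by blast
qed

end


context rtree begin

lemma up_cases:
  assumes "p \<in> up_closure V E r t"
  obtains (L) v where "p = Inl v" "v \<in> V" "t \<in> set (rp v)"
    | (R) \<omega> f m where "p = Inr \<omega>" "\<omega> \<in> ends V E" "f \<in> \<omega>" "f 0 = r" "f m = t"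
  using assms unfolding up_closure_def tree_le_iff by (auto simp: image_iff)

lemma rps_cases:
  assumes "p \<in> region_points V E S"
  obtains (L) v where "p = Inl v" "v \<in> S"
    | (R) \<omega> h where "p = Inr \<omega>" "\<omega> \<in> ends V E" "h \<in> \<omega>" "range h \<subseteq> S"
  using assms unfolding region_points_def by (auto simp: image_iff)

lemma rps_InrI: "\<omega> \<in> ends V E \<Longrightarrow> h \<in> \<omega> \<Longrightarrow> range h \<subseteq> S \<Longrightarrow> Inr \<omega> \<in> region_points V E S"
  unfolding region_points_def by (rule UnI2, rule imageI) blast

lemma rps_InlI: "v \<in> S \<Longrightarrow> Inl v \<in> region_points V E S"
  unfolding region_points_def by (rule UnI1, rule imageI)

lemma ray_tail_sub:
  assumes f: "is_ray V E f" "f 0 = r" shows "range (\<lambda>k. f (m + k)) \<subseteq> sub (f m)"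
proof clarify
  fix k
  have "f (m + k) \<in> V" using f unfolding is_ray_def by blast
  moreover have "f m \<in> set (rp (f (m + k)))" unfolding ray_from_r_mem[OF f] by (rule exI[of _ m]) simp
  ultimately show "f (m + k) \<in> sub (f m)" unfolding sub_def by blast
qed

lemma up_sub: assumes "p \<in> up_closure V E r t" shows "p \<in> region_points V E (sub t)"
  using assms
proof (cases rule: up_cases)
  case (L v) then show ?thesis using rps_InlI[of v "sub t"] unfolding sub_def by blast
next
  case (R \<omega> f m)
  have f: "is_ray V E f" using ends_mem(1) R by blast
  have "(\<lambda>k. f (m + k)) \<in> \<omega>" using ends_mem(2)[OF R(2,3)] ray_tail[OF f] by blast
  moreover have "range (\<lambda>k. f (m + k)) \<subseteq> sub t" using ray_tail_sub[OF f R(4), of m] R(5) by simp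
  ultimately show ?thesis using rps_InrI R by blast
qed

lemma up_disj:
  assumes "p \<in> up_closure V E r t" "p \<in> region_points V E S" "S \<inter> sub t = {}"
  shows False
  using assms(1)
proof (cases rule: up_cases)
  case (L v)
  then have "v \<in> S" using assms(2) by (auto elim: rps_cases)
  then show False using L assms(3) unfolding sub_def by blast
next
  case (R \<omega> f m)
  obtain h where h: "h \<in> \<omega>" "range h \<subseteq> S" using assms(2) R(1) by (auto elim: rps_cases)
  have f: "is_ray V E f" using ends_mem(1) R by blast
  have "ray_equiv f h" using ends_mem(2)[OF R(2,3), of h] h(1) by blast
  then obtain i j where ij: "\<And>k. f (i + k) = h (j + k)" unfolding ray_equiv_def by blast
  have "f (m + i) \<in> sub t" using ray_tail_sub[OF f R(4), of m] R(5) by blast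
  moreover have "f (m + i) = h (j + m)" using ij[of m] by (simp add: add.commute)
  ultimately show False using h(2) assms(3) by blast
qed

lemma UF_restrict:
  assumes xV: "x \<in> V"
  shows "region_points V E (UF x (F \<inter> {t \<in> children V E r x. up_closure V E r t \<inter> X \<noteq> {}})) \<inter> X
    \<subseteq> region_points V E (UF x F)"
proof
  let ?C = "{t \<in> children V E r x. up_closure V E r t \<inter> X \<noteq> {}}"
  fix p assume p: "p \<in> region_points V E (UF x (F \<inter> ?C)) \<inter> X"
  then have pX: "p \<in> X" and pr: "p \<in> region_points V E (UF x (F \<inter> ?C))" by auto
  from pr show "p \<in> region_points V E (UF x F)"
  proof (cases rule: rps_cases)
    case (L v)
    have "v \<in> UF x F"
    proof (cases "v = x")
      case True then show ?thesis using L UF_def by auto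
    next
      case False
      have v: "v \<in> V" "x \<in> set (rp v)" "ch x v \<notin> F \<inter> ?C" using L False UF_def by auto
      note cc = ch_child[OF v(1,2) False]
      have "Inl v \<in> up_closure V E r (ch x v)"
        using cc(2) unfolding up_closure_def sub_def tree_le_iff by (intro UnI1 imageI) simp
      then have "ch x v \<in> ?C" using pX L cc(1) by blast
      then have "ch x v \<notin> F" using v(3) by blast
      then show ?thesis using v UF_def by auto
    qed
    then show ?thesis using L rps_InlI by blast
  next
    case (R \<omega> h)
    have h: "is_ray V E h" using ends_mem(1) R by blast
    obtain n c where nc: "c \<in> children V E r x" "c \<notin> F \<inter> ?C" "\<And>k. h (n + k) \<in> sub c"
      using tail_in_child[OF xV h R(4)] by blast
    obtain f where f: "f \<in> \<omega>" "f 0 = r" "c \<in> range f" using end_up[OF R(2,3) nc(3)] by blast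
    have "\<omega> \<in> {\<omega> \<in> ends V E. \<exists>f\<in>\<omega>. f 0 = r \<and> c \<in> range f}" using f R(2) by blast
    then have "Inr \<omega> \<in> up_closure V E r c" unfolding up_closure_def by (rule UnI2[OF imageI])
    then have "c \<in> ?C" using pX R(1) nc(1) by blast
    then have "c \<notin> F" using nc(2) by blast
    then have "sub c \<subseteq> UF x F" using sub_UF[OF xV nc(1)] by blast
    then have "range (\<lambda>k. h (n + k)) \<subseteq> UF x F" using nc(3) by blast
    moreover have "(\<lambda>k. h (n + k)) \<in> \<omega>" using ends_mem(2)[OF R(2,3)] ray_tail[OF h] by blast
    ultimately show ?thesis using rps_InrI R by blast
  qed
qed

end


context rtree begin

lemma dir1:
  assumes fc: "first_countable (subtopology (end_topology V E) X)"
    and xV: "x \<in> V" and xX: "Inl x \<in> X"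
  shows "countable {t \<in> children V E r x. up_closure V E r t \<inter> X \<noteq> {}}"
proof (rule ccontr)
  let ?T = "end_topology V E"
  let ?Y = "subtopology ?T X"
  let ?C = "{t \<in> children V E r x. up_closure V E r t \<inter> X \<noteq> {}}"
  assume nc: "\<not> countable ?C"
  have xU: "\<And>F. x \<in> UF x F" using rp_last_in[OF xV] xV unfolding UF_def by blast
  have "openin ?T (region_points V E (UF x {}))" by (rule open_region, rule UF_region[OF xV]) simp
  then have "region_points V E (UF x {}) \<subseteq> topspace ?T" by (rule openin_subset)
  then have "Inl x \<in> topspace ?T" using rps_InlI[OF xU] by blast
  then have "Inl x \<in> topspace ?Y" using xX by simp
  from bspec[OF fc[unfolded first_countable_def] this]
  obtain B where B0: "countable B" "\<forall>b\<in>B. openin ?Y b"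
    "\<forall>U. openin ?Y U \<and> Inl x \<in> U \<longrightarrow> (\<exists>b\<in>B. Inl x \<in> b \<and> b \<subseteq> U)"
    by blast
  have B: "countable B" "\<And>b. b \<in> B \<Longrightarrow> openin ?Y b"
    "\<And>U. openin ?Y U \<Longrightarrow> Inl x \<in> U \<Longrightarrow> \<exists>b\<in>B. Inl x \<in> b \<and> b \<subseteq> U"
    using B0 by auto
  define B' where "B' = {b \<in> B. Inl x \<in> b}"
  have "\<forall>b\<in>B'. \<exists>F. finite F \<and> region_points V E (UF x F) \<inter> X \<subseteq> b"
  proof
    fix b assume b: "b \<in> B'"
    have "openin ?Y b" using b B(2) unfolding B'_def by blast
    then obtain W where W: "openin ?T W" "b = W \<inter> X" unfolding openin_subtopology by blast
    then have "Inl x \<in> W" using b B'_def by blast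
    then obtain F where "finite F" "region_points V E (UF x F) \<subseteq> W" using vertex_nbhd[OF xV W(1)] by blast
    then show "\<exists>F. finite F \<and> region_points V E (UF x F) \<inter> X \<subseteq> b" using W(2) by blast
  qed
  from bchoice[OF this] obtain Fb where Fb0: "\<forall>b\<in>B'. finite (Fb b) \<and> region_points V E (UF x (Fb b)) \<inter> X \<subseteq> b"
    by blast
  have Fb: "\<And>b. b \<in> B' \<Longrightarrow> finite (Fb b) \<and> region_points V E (UF x (Fb b)) \<inter> X \<subseteq> b"
    using Fb0 by blast
  have "countable B'" using B(1) unfolding B'_def by simp
  have cU: "countable (\<Union>b\<in>B'. Fb b)"
  proof (rule countable_UN[OF \<open>countable B'\<close>])
    fix b assume "b \<in> B'"
    then have "finite (Fb b)" using Fb by blast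
    then show "countable (Fb b)" by (rule countable_finite)
  qed
  have "\<not> ?C \<subseteq> (\<Union>b\<in>B'. Fb b)"
  proof
    assume "?C \<subseteq> (\<Union>b\<in>B'. Fb b)"
    from countable_subset[OF this cU] nc show False by blast
  qed
  then obtain t where t: "t \<in> ?C" "t \<notin> (\<Union>b\<in>B'. Fb b)" by blast
  then obtain p where p: "p \<in> up_closure V E r t" "p \<in> X" and tc: "t \<in> children V E r x" by blast
  have pin: "p \<in> region_points V E (UF x F)" if "t \<notin> F" for F
  proof -
    have "sub t \<subseteq> UF x F" using sub_UF[OF xV tc that] .
    then show ?thesis using up_sub[OF p(1)] region_points_mono by blast
  qed
  have pout: "p \<notin> region_points V E (UF x {t})"
    using up_disj[OF p(1)] sub_UF_disj[OF xV tc] by blast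
  have "openin ?Y (region_points V E (UF x {t}) \<inter> X)"
    by (rule openin_subtopology_Int, rule open_region, rule UF_region[OF xV]) simp
  moreover have "Inl x \<in> region_points V E (UF x {t}) \<inter> X" using rps_InlI[OF xU] xX by blast
  ultimately obtain b where b: "b \<in> B" "Inl x \<in> b" "b \<subseteq> region_points V E (UF x {t}) \<inter> X"
    using B(3) by blast
  then have bB: "b \<in> B'" unfolding B'_def by blast
  then have "t \<notin> Fb b" using t(2) by blast
  then have "p \<in> region_points V E (UF x (Fb b)) \<inter> X" using pin p(2) by blast
  then have "p \<in> b" using Fb[OF bB] by blast
  then show False using b(3) pout by blast
qed

lemma dir2:
  assumes cnt: "\<forall>x\<in>V. Inl x \<in> X \<longrightarrow> countable {t \<in> children V E r x. up_closure V E r t \<inter> X \<noteq> {}}"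
    and XP: "X \<subseteq> points V E"
  shows "first_countable (subtopology (end_topology V E) X)"
  unfolding first_countable_def
proof
  let ?T = "end_topology V E"
  let ?Y = "subtopology ?T X"
  fix p assume "p \<in> topspace ?Y"
  then have pX: "p \<in> X" by simp
  then have "p \<in> points V E" using XP by blast
  then consider (L) x where "p = Inl x" "x \<in> V" | (R) \<omega> where "p = Inr \<omega>" "\<omega> \<in> ends V E"
    unfolding points_def by (auto simp: image_iff)
  then show "\<exists>B. countable B \<and> (\<forall>V\<in>B. openin ?Y V) \<and> (\<forall>U. openin ?Y U \<and> p \<in> U \<longrightarrow> (\<exists>V\<in>B. p \<in> V \<and> V \<subseteq> U))"
  proof cases
    case L
    let ?C = "{t \<in> children V E r x. up_closure V E r t \<inter> X \<noteq> {}}"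
    have xU: "\<And>F. x \<in> UF x F" using rp_last_in[OF L(2)] L(2) unfolding UF_def by blast
    have cC: "countable ?C" using cnt L pX by blast
    define B where "B = (\<lambda>F. region_points V E (UF x F) \<inter> X) ` {F. finite F \<and> F \<subseteq> ?C}"
    have "countable B" unfolding B_def by (rule countable_image, rule countable_Collect_finite_subset[OF cC])
    moreover have "\<forall>b\<in>B. openin ?Y b"
      unfolding B_def by (auto intro!: openin_subtopology_Int open_region UF_region L(2))
    moreover have "\<exists>b\<in>B. p \<in> b \<and> b \<subseteq> U" if U: "openin ?Y U" "p \<in> U" for U
    proof -
      obtain W where W: "openin ?T W" "U = W \<inter> X" using U(1) unfolding openin_subtopology by blast
      then have "Inl x \<in> W" using U(2) L by blast
      then obtain F where F: "finite F" "region_points V E (UF x F) \<subseteq> W" using vertex_nbhd[OF L(2) W(1)] by blast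
      have "region_points V E (UF x (F \<inter> ?C)) \<inter> X \<subseteq> region_points V E (UF x F)"
        by (rule UF_restrict[OF L(2)])
      then have "region_points V E (UF x (F \<inter> ?C)) \<inter> X \<subseteq> U" using F(2) W(2) by blast
      moreover have "region_points V E (UF x (F \<inter> ?C)) \<inter> X \<in> B" unfolding B_def using F(1) by blast
      moreover have "p \<in> region_points V E (UF x (F \<inter> ?C)) \<inter> X" using rps_InlI[OF xU] L(1) pX by blast
      ultimately show ?thesis by blast
    qed
    ultimately show ?thesis by blast
  next
    case R
    obtain g where g: "g \<in> \<omega>" "g 0 = r" "is_ray V E g" using normal_in_end[OF R(2)] by blast
    have gV: "g n \<in> V" for n using g(3) unfolding is_ray_def by blast
    define B where "B = range (\<lambda>n. region_points V E (sub (g n)) \<inter> X)"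
    have "countable B" unfolding B_def by (rule countable_image) simp
    moreover have "\<forall>b\<in>B. openin ?Y b"
      unfolding B_def by (auto intro!: openin_subtopology_Int open_region sub_region gV)
    moreover have "\<exists>b\<in>B. p \<in> b \<and> b \<subseteq> U" if U: "openin ?Y U" "p \<in> U" for U
    proof -
      obtain W where W: "openin ?T W" "U = W \<inter> X" using U(1) unfolding openin_subtopology by blast
      then have "Inr \<omega> \<in> W" using U(2) R by blast
      then obtain n where "region_points V E (sub (g n)) \<subseteq> W" using end_nbhd[OF g(3,2) R(2) g(1) W(1)] by blast
      then have "region_points V E (sub (g n)) \<inter> X \<subseteq> U" using W(2) by blast
      moreover have "p \<in> region_points V E (sub (g n)) \<inter> X" using end_in_sub[OF g(3,2) R(2) g(1)] R(1) pX by blast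
      ultimately show ?thesis unfolding B_def by blast
    qed
    ultimately show ?thesis by blast
  qed
qed

end

theorem lemma3p2:
  fixes V :: "'v set" and E :: "'v \<Rightarrow> 'v \<Rightarrow> bool" and r :: 'v and X :: "'v point set"
  assumes "tree V E" and "r \<in> V" and "X \<subseteq> points V E"
  shows "first_countable (subtopology (end_topology V E) X) \<longleftrightarrow>
    (\<forall>x\<in>V. Inl x \<in> X \<longrightarrow>
       countable {t \<in> children V E r x. up_closure V E r t \<inter> X \<noteq> {}})"
proof -
  interpret rtree V E r using assms(1,2) by unfold_locales
  show ?thesis
  proof
    assume fc: "first_countable (subtopology (end_topology V E) X)"
    show "\<forall>x\<in>V. Inl x \<in> X \<longrightarrow> countable {t \<in> children V E r x. up_closure V E r t \<inter> X \<noteq> {}}"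
      using dir1[OF fc] by blast
  next
    assume c: "\<forall>x\<in>V. Inl x \<in> X \<longrightarrow> countable {t \<in> children V E r x. up_closure V E r t \<inter> X \<noteq> {}}"
    show "first_countable (subtopology (end_topology V E) X)" by (rule dir2[OF c assms(3)])
  qed
qed



end
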